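(* Let $\beta$ be a totally positive quadratic integer with minimal polynomial $x^2 - Ex + C$, where $E, C \in \mathbb{Z}_{\geq 1}$, and let $n \geq 0$ be an integer. If $f \in \mathbb{Z}_{\geq 0}[x]$ satisfies $f(\beta) = E\beta^n$ and $f(x) \neq Ex^n$, then $f$ has the form \[ f(x) = x^{n+1} + a_n x^n + \dots + a_1 x + a_0 \] for some $a_0, \ldots, a_n \in \mathbb{Z}_{\geq 0}$.
   Context: A quadratic integer is a root of a monic irreducible quadratic polynomial in $\mathbb{Z}[x]$; it is totally positive if both it and its conjugate are positive real numbers. *)

theory Defs
  imports "HOL-Computational_Algebra.Polynomial" Complex_Main
begin

end

theory Submission
  imports Defs
begin

lemma quad_irrat:
  fixes \<beta> :: real and E C :: int
  assumes irred: "irreducible ([:C, -E, 1:] :: int poly)"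
    and root: "\<beta>^2 - E*\<beta> + C = 0"
  shows "\<beta> \<notin> \<rat>"
proof
  assume "\<beta> \<in> \<rat>"
  then obtain a b :: int where b: "b > 0" "coprime a b" "\<beta> = of_int a / of_int b"
    by (rule Rats_cases')
  have ha: "real_of_int a = \<beta> * of_int b" using b by simp
  have "real_of_int (a^2 - E*a*b + C*b^2) = (\<beta> * of_int b)^2 - of_int E*(\<beta> * of_int b)*of_int b + of_int C*(of_int b)^2"
    by (simp add: ha[symmetric])
  also have "\<dots> = (of_int b)^2 * (\<beta>^2 - E*\<beta> + C)" by (simp add: algebra_simps power2_eq_square)
  finally have "real_of_int (a^2 - E*a*b + C*b^2) = (of_int b)^2 * (\<beta>^2 - E*\<beta> + C)" .
  hence "real_of_int (a^2 - E*a*b + C*b^2) = 0" using root by simp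
  hence eq: "a^2 - E*a*b + C*b^2 = 0" by (simp only: of_int_eq_0_iff)
  hence "a^2 = b*(E*a - C*b)" by (simp add: algebra_simps power2_eq_square)
  hence d1: "b dvd a^2" by simp
  have c1: "coprime (a^2) b" using b(2) by simp
  have "is_unit b" by (rule coprime_common_divisor[OF c1 d1 dvd_refl])
  hence b1: "b = 1" using b(1) by simp
  have Ck: "C = a*(E-a)" using eq b1 by (simp add: algebra_simps power2_eq_square)
  have fac: "[:C, -E, 1:] = [:-a, 1:] * [:-(E-a), 1:]"
    using Ck by (simp add: algebra_simps)
  have nu: "\<not> is_unit [:-c, 1::int:]" for c
    by (simp add: is_unit_poly_iff)
  have "is_unit [:-a, 1:] \<or> is_unit [:-(E-a), 1::int:]" by (rule irreducibleD[OF irred fac])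
  then show False using nu by blast
qed

lemma quad_reduce:
  fixes E C :: int and p :: "int poly"
  shows "\<exists>(a::int) (b::int). \<forall>t::real. t^2 = E*t - C \<longrightarrow> poly (map_poly real_of_int p) t = a + b*t"
proof (induction p rule: pCons_induct)
  case 0
  then show ?case by (rule exI[of _ 0], rule exI[of _ 0]) simp
next
  case (pCons c p)
  then obtain a b :: int where ab: "\<forall>t::real. t^2 = E*t - C \<longrightarrow> poly (map_poly real_of_int p) t = a + b*t"
    by blast
  show ?case
  proof (rule exI[of _ "c - b*C"], rule exI[of _ "a + b*E"], intro allI impI)
    fix t :: real assume t: "t^2 = E*t - C"
    have "poly (map_poly real_of_int (pCons c p)) t = c + t * (a + b*t)"
      using ab t by (simp add: map_poly_pCons)
    also have "\<dots> = c + a*t + b*t^2" by (simp add: algebra_simps power2_eq_square)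
    also have "\<dots> = real_of_int (c - b*C) + real_of_int (a + b*E) * t"
      by (simp add: t algebra_simps)
    finally show "poly (map_poly real_of_int (pCons c p)) t = real_of_int (c - b*C) + real_of_int (a + b*E) * t" .
  qed
qed

lemma poly_sum_le:
  fixes f :: "int poly" and t :: real
  assumes "\<forall>i. coeff f i \<ge> 0" "t > 0" "degree f \<le> N"
  shows "poly (map_poly real_of_int f) t = (\<Sum>i\<le>N. of_int (coeff f i) * t^i)"
proof -
  have "poly (map_poly real_of_int f) t = (\<Sum>i\<le>degree (map_poly real_of_int f). coeff (map_poly real_of_int f) i * t^i)"
    by (rule poly_altdef)
  also have "\<dots> = (\<Sum>i\<le>N. coeff (map_poly real_of_int f) i * t^i)"
    apply (rule sum.mono_neutral_left)
    using assms(3) by (auto simp: degree_map_poly coeff_eq_0)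
  finally show ?thesis by (simp add: coeff_map_poly)
qed

theorem lemma10:
  fixes \<beta> :: real and E C :: int and n :: nat and f :: "int poly"
  assumes E_pos: "E \<ge> 1" and C_pos: "C \<ge> 1"
    and irred: "irreducible ([:C, -E, 1:] :: int poly)"
    and root: "poly (map_poly real_of_int [:C, -E, 1:]) \<beta> = 0"
    and tot_pos: "\<beta> > 0" "real_of_int E - \<beta> > 0"
    and f_nonneg: "\<forall>i. coeff f i \<ge> 0"
    and f_val: "poly (map_poly real_of_int f) \<beta> = real_of_int E * \<beta> ^ n"
    and f_ne: "f \<noteq> monom E n"
  shows "\<exists>a :: nat \<Rightarrow> int. (\<forall>i\<le>n. a i \<ge> 0) \<and>
           f = monom 1 (n + 1) + (\<Sum>i\<le>n. monom (a i) i)"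
proof -
  define P where "P t = poly (map_poly real_of_int f) t" for t
  define w where "w = real_of_int E - \<beta>"
  have hb: "\<beta>^2 = E*\<beta> - C" using root by (simp add: map_poly_pCons algebra_simps power2_eq_square)
  have hb': "\<beta>^2 - E*\<beta> + C = 0" using hb by simp
  have hw: "w^2 = E*w - C" unfolding w_def using hb by (simp add: algebra_simps power2_eq_square)
  have irr: "\<beta> \<notin> \<rat>" by (rule quad_irrat[OF irred hb'])
  obtain a b :: int where ab: "\<forall>t::real. t^2 = E*t - C \<longrightarrow> poly (map_poly real_of_int (f - monom E n)) t = a + b*t"
    using quad_reduce by blast
  have gpoly: "poly (map_poly real_of_int (f - monom E n)) t = P t - E * t^n" for t :: real
  proof -
    have "map_poly real_of_int (f - monom E n) = map_poly real_of_int f - monom (of_int E) n"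
      by (rule poly_eqI) (simp add: coeff_map_poly coeff_monom)
    then show ?thesis unfolding P_def by (simp add: poly_monom)
  qed
  have "a + b*\<beta> = 0" using ab hb gpoly f_val P_def by force
  have b0: "b = 0"
  proof (rule ccontr)
    assume "b \<noteq> 0"
    then have "\<beta> = - of_int a / of_int b" using \<open>a + b*\<beta> = 0\<close> by (simp add: field_simps)
    then have "\<beta> \<in> \<rat>" by simp
    then show False using irr by simp
  qed
  then have a0: "a = 0" using \<open>a + b*\<beta> = 0\<close> by simp
  have Pw: "P w = E * w^n" using ab hw gpoly a0 b0 by force
  have Pb: "P \<beta> = E * \<beta>^n" using f_val P_def by simp
  have bw: "\<beta> \<noteq> w"
  proof
    assume "\<beta> = w"
    then have "\<beta> = of_int E / 2" unfolding w_def by simp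
    then have "\<beta> \<in> \<rat>" by (simp only: Rats_divide Rats_of_int Rats_number_of)
    then show False using irr by simp
  qed
  obtain u v :: real where uv: "u + v = E" "u * v = C" "0 < v" "v < u" "P u = E*u^n" "P v = E*v^n"
  proof -
    have s1: "w + \<beta> = E" "\<beta> + w = E" unfolding w_def by simp_all
    have p1: "w * \<beta> = C" unfolding w_def using hb by (simp add: algebra_simps power2_eq_square)
    have p2: "\<beta> * w = C" using p1 by (simp add: mult.commute)
    have wpos: "w > 0" unfolding w_def using tot_pos(2) .
    show ?thesis
    proof (cases "\<beta> < w")
      case True
      show ?thesis by (rule that[of w \<beta>, OF s1(1) p1 tot_pos(1) True Pw Pb])
    next
      case False
      then have "w < \<beta>" using bw by simp
      show ?thesis by (rule that[of \<beta> w, OF s1(2) p2 wpos \<open>w < \<beta>\<close> Pb Pw])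
    qed
  qed
  have "real_of_int (E^2 - 4*C) = (u + v)^2 - 4*(u*v)" using uv(1,2) by simp
  also have "\<dots> = (u - v)^2" by (simp add: algebra_simps power2_eq_square)
  finally have "real_of_int (E^2 - 4*C) = (u - v)^2" .
  then have "real_of_int (E^2 - 4*C) > 0" using uv(4) by simp
  then have "E^2 - 4*C > 0" using of_int_0_less_iff by blast
  then have "E^2 - 4*C \<ge> 1" by simp
  then have "real_of_int 1 \<le> real_of_int (E^2 - 4*C)" by (simp only: of_int_le_iff)
  then have "(u - v)^2 \<ge> 1" using \<open>real_of_int (E^2 - 4*C) = (u - v)^2\<close> by simp
  then have sq1: "1^2 \<le> (u - v)^2" by simp
  have "0 \<le> u - v" using uv(4) by simp
  then have uv1: "u - v \<ge> 1" using power2_le_imp_le[OF sq1] by simp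
  have u1: "u > 1" using uv(3) uv1 by linarith
  have uE: "u^2 > E"
  proof -
    have "u^2 - E = u^2 - u - v" using uv(1) by linarith
    also have "\<dots> = (u - 1)^2 + (u - v - 1)" by (simp add: power2_eq_square algebra_simps)
    also have "\<dots> \<ge> (u - 1)^2" using uv1 by linarith
    finally have "u^2 - E \<ge> (u - 1)^2" .
    moreover have "(u - 1)^2 > 0" using u1 by simp
    ultimately show ?thesis by linarith
  qed
  define N where "N = degree f"
  have Ps: "P t = (\<Sum>i\<le>N. of_int (coeff f i) * t^i)" if "t > 0" for t
    unfolding P_def N_def by (rule poly_sum_le[OF f_nonneg that], simp)
  have term_le: "of_int (coeff f k) * t^k \<le> P t" if "t > 0" for t k
  proof (cases "k \<le> N")
    case True
    show ?thesis unfolding Ps[OF that]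
      by (rule member_le_sum[of k "{..N}" "\<lambda>i. of_int (coeff f i) * t^i"]) (use True f_nonneg that in auto)
  next
    case False
    then have "coeff f k = 0" unfolding N_def by (simp add: coeff_eq_0)
    moreover have "P t \<ge> 0" unfolding Ps[OF that] using f_nonneg that by (auto intro!: sum_nonneg)
    ultimately show ?thesis by simp
  qed
  have Pu: "P u = E*u^n" using uv by simp
  have upos: "u > 0" using u1 by simp
  have fnE: "coeff f n < E"
  proof (rule ccontr)
    assume "\<not> coeff f n < E"
    then have ge: "coeff f n \<ge> E" by simp
    have Nn: "n \<le> N"
    proof (rule ccontr)
      assume "\<not> n \<le> N" then have "coeff f n = 0" unfolding N_def by (simp add: coeff_eq_0)
      then show False using ge E_pos by simp
    qed
    have split: "P u = of_int (coeff f n) * u^n + (\<Sum>i\<in>{..N}-{n}. of_int (coeff f i) * u^i)"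
      unfolding Ps[OF upos] using Nn by (simp add: sum.remove)
    have nn: "(\<Sum>i\<in>{..N}-{n}. of_int (coeff f i) * u^i) \<ge> 0"
      using f_nonneg upos by (auto intro!: sum_nonneg)
    have "of_int (coeff f n) * u^n \<ge> E * u^n" using ge upos by (simp add: mult_right_mono)
    then have z: "(\<Sum>i\<in>{..N}-{n}. of_int (coeff f i) * u^i) = 0" and en: "of_int (coeff f n) * u^n = E * u^n"
      using split nn Pu by linarith+
    have cz: "coeff f i = 0" if "i \<noteq> n" for i
    proof (cases "i \<le> N")
      case True
      have "\<forall>j\<in>{..N}-{n}. of_int (coeff f j) * u^j = 0"
        using sum_nonneg_eq_0_iff[of "{..N}-{n}" "\<lambda>j. of_int (coeff f j) * u^j"] z f_nonneg upos by auto
      then have "of_int (coeff f i) * u^i = 0" using True that by auto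
      then show ?thesis using upos by simp
    next
      case False then show ?thesis unfolding N_def by (simp add: coeff_eq_0)
    qed
    have "coeff f n = E" using en upos by simp
    then have "f = monom E n" using cz by (intro poly_eqI) (auto simp: coeff_monom)
    then show False using f_ne by simp
  qed
  have hi: "coeff f k = 0" if "k \<ge> n + 2" for k
  proof (rule ccontr)
    assume "coeff f k \<noteq> 0"
    then have "coeff f k \<ge> 1" using f_nonneg by (metis int_one_le_iff_zero_less order_le_less)
    then have "u^k \<le> of_int (coeff f k) * u^k" using upos by simp
    also have "\<dots> \<le> E * u^n" using term_le[OF upos, of k] Pu by simp
    finally have a1: "u^k \<le> E * u^n" .
    have "u^(n+2) \<le> u^k" by (rule power_increasing[OF that]) (use u1 in simp)
    moreover have "u^(n+2) = u^n * u^2" by (simp only: power_add)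
    moreover have "u^n * u^2 > u^n * E" using uE upos by simp
    moreover have "u^n * E = E * u^n" by (rule mult.commute)
    ultimately show False using a1 by linarith
  qed
  have le1: "coeff f (n+1) \<le> 1"
  proof (rule ccontr)
    assume "\<not> coeff f (n+1) \<le> 1"
    then have "coeff f (n+1) \<ge> 2" by simp
    then have "2 * u^(n+1) \<le> of_int (coeff f (n+1)) * u^(n+1)" using upos
      by (intro mult_right_mono) auto
    also have "\<dots> \<le> E * u^n" using term_le[OF upos, of "n+1"] Pu by simp
    finally have "2 * u^(n+1) \<le> E * u^n" .
    moreover have "2 * u^(n+1) = (2*u) * u^n" by simp
    moreover have "(2*u) * u^n > E * u^n" using uv upos by simp
    ultimately show False by simp
  qed
  have ge1: "coeff f (n+1) \<ge> 1"
  proof (rule ccontr)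
    assume "\<not> coeff f (n+1) \<ge> 1"
    moreover have "coeff f (n+1) \<ge> 0" using f_nonneg by simp
    ultimately have c0: "coeff f (n+1) = 0" by presburger
    have zk: "coeff f k = 0" if "k > n" for k
      using c0 hi that by (cases "k = n+1") auto
    have dn: "degree f \<le> n" by (rule degree_le) (use zk in blast)
    have Pn: "P t = (\<Sum>i<n. of_int (coeff f i) * t^i) + of_int (coeff f n) * t^n" if "t > 0" for t
      unfolding P_def poly_sum_le[OF f_nonneg that dn] by (simp add: lessThan_Suc_atMost[symmetric])
    define c where "c = real_of_int E - of_int (coeff f n)"
    have cpos: "c > 0" using fnE unfolding c_def by simp
    define Q where "Q t = (\<Sum>i<n. of_int (coeff f i) * t^i)" for t :: real
    have Qu: "Q u = c * u^n" using Pn[OF upos] Pu unfolding Q_def c_def by (simp add: algebra_simps)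
    have Qv: "Q v = c * v^n" using Pn[OF uv(3)] uv(6) unfolding Q_def c_def by (simp add: algebra_simps)
    have "Q u > 0" using Qu cpos upos by simp
    have "\<exists>k<n. coeff f k \<noteq> 0"
    proof (rule ccontr)
      assume "\<not> (\<exists>k<n. coeff f k \<noteq> 0)"
      then have "Q u = 0" unfolding Q_def by simp
      then show False using \<open>Q u > 0\<close> by simp
    qed
    then obtain k where k: "k < n" "coeff f k \<noteq> 0" by blast
    have tl: "v^n * (of_int (coeff f i) * u^i) \<le> u^n * (of_int (coeff f i) * v^i)" if "i < n" for i
    proof -
      have "v^n * u^i = v^(n-i) * (v^i * u^i)" using that by (simp add: power_add[symmetric])
      also have "\<dots> \<le> u^(n-i) * (v^i * u^i)"
        by (intro mult_right_mono power_mono) (use uv(3,4) in auto)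
      also have "\<dots> = u^n * v^i" using that by (simp add: power_add[symmetric] algebra_simps)
      finally have X: "v^n * u^i \<le> u^n * v^i" .
      have "of_int (coeff f i) * (v^n * u^i) \<le> of_int (coeff f i) * (u^n * v^i)"
        by (rule mult_left_mono[OF X]) (use f_nonneg in simp)
      then show ?thesis by (simp add: mult_ac)
    qed
    have tk: "v^n * (of_int (coeff f k) * u^k) < u^n * (of_int (coeff f k) * v^k)"
    proof -
      have "v^n * u^k = v^(n-k) * (v^k * u^k)" using k by (simp add: power_add[symmetric])
      also have "\<dots> < u^(n-k) * (v^k * u^k)"
        by (intro mult_strict_right_mono power_strict_mono) (use uv(3,4) k in auto)
      also have "\<dots> = u^n * v^k" using k by (simp add: power_add[symmetric] algebra_simps)
      finally have "v^n * u^k < u^n * v^k" .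
      moreover have "coeff f k \<ge> 0" using f_nonneg by simp
      then have "coeff f k > 0" using k(2) by simp
      then have "of_int (coeff f k) > (0::real)" by simp
      ultimately have "of_int (coeff f k) * (v^n * u^k) < of_int (coeff f k) * (u^n * v^k)"
        by (intro mult_strict_left_mono)
      then show ?thesis by (simp add: mult_ac)
    qed
    have "(\<Sum>i<n. v^n * (of_int (coeff f i) * u^i)) < (\<Sum>i<n. u^n * (of_int (coeff f i) * v^i))"
    proof (rule sum_strict_mono_ex1)
      show "finite {..<n}" by simp
      show "\<forall>x\<in>{..<n}. v^n * (of_int (coeff f x) * u^x) \<le> u^n * (of_int (coeff f x) * v^x)"
        using tl by simp
      show "\<exists>a\<in>{..<n}. v^n * (of_int (coeff f a) * u^a) < u^n * (of_int (coeff f a) * v^a)"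
        using tk k(1) by blast
    qed
    then have "v^n * Q u < u^n * Q v" unfolding Q_def sum_distrib_left .
    then show False using Qu Qv by (simp add: algebra_simps)
  qed
  have c1: "coeff f (n+1) = 1" using le1 ge1 by simp
  show ?thesis
  proof (rule exI[of _ "coeff f"], intro conjI allI impI)
    fix i show "i \<le> n \<Longrightarrow> coeff f i \<ge> 0" using f_nonneg by simp
  next
    show "f = monom 1 (n + 1) + (\<Sum>i\<le>n. monom (coeff f i) i)"
    proof (rule poly_eqI)
      fix k
      have s: "coeff (\<Sum>i\<le>n. monom (coeff f i) i) k = (if k \<le> n then coeff f k else 0)"
        by (simp add: coeff_sum coeff_monom)
      show "coeff f k = coeff (monom 1 (n + 1) + (\<Sum>i\<le>n. monom (coeff f i) i)) k"
        unfolding coeff_add s using c1 hi[of k] by (auto simp: coeff_monom)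
    qed
  qed
qed

end
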